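(* Let $p$ be a prime, let $P$ be a finite $p$-group, and let $T$ be a subgroup of $P$ of index $p^c$. Then for every non-negative integer $k$, \[ |\mathrm{Sub}_{p^k}(P,T)| \leq \binom{c}{k}_p . \]
   Context: For a group $R$, a subgroup $T\le R$ and an integer $k$, $\mathrm{Sub}_k(R,T)=\{H\le R : T\le H,\ [R:H]=k\}$. For a prime $p$ and non-negative integers $m,r$, the Gaussian binomial coefficient is $\binom{m}{r}_p=\prod_{i=0}^{r-1}\frac{p^{m-i}-1}{p^{i+1}-1}$. *)

theory Defs
  imports "HOL-Algebra.Algebra"
begin

definition Sub_idx :: "('a, 'b) monoid_scheme \<Rightarrow> nat \<Rightarrow> 'a set \<Rightarrow> 'a set set" where
  "Sub_idx R k T = {H. subgroup H R \<and> T \<subseteq> H \<and> card (rcosets\<^bsub>R\<^esub> H) = k}"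

definition gauss_binom :: "nat \<Rightarrow> nat \<Rightarrow> nat \<Rightarrow> real" where
  "gauss_binom p m r = (\<Prod>i<r. (real p ^ (m - i) - 1) / (real p ^ (i + 1) - 1))"

end

theory Submission
  imports Defs "HOL-Computational_Algebra.Primes"
begin

locale pgrp = group G for G (structure) +
  fixes p n :: nat
  assumes prime_p: "Factorial_Ring.prime p" and fin: "finite (carrier G)" and ordG: "order G = p ^ n"
begin

lemma p_ge2: "2 \<le> p" using prime_p prime_ge_2_nat by blast

lemma sub_sub:
  assumes "subgroup A G" "subgroup B G" "A \<subseteq> B"
  shows "subgroup A (G\<lparr>carrier := B\<rparr>)"
proof
  show "A \<subseteq> carrier (G\<lparr>carrier := B\<rparr>)" using assms(3) by simp
  show "\<And>x y. x \<in> A \<Longrightarrow> y \<in> A \<Longrightarrow> x \<otimes>\<^bsub>G\<lparr>carrier := B\<rparr>\<^esub> y \<in> A"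
    using assms(1) by (simp add: subgroup.m_closed)
  show "\<one>\<^bsub>G\<lparr>carrier := B\<rparr>\<^esub> \<in> A" using assms(1) by (simp add: subgroup.one_closed)
  show "\<And>x. x \<in> A \<Longrightarrow> inv\<^bsub>G\<lparr>carrier := B\<rparr>\<^esub> x \<in> A"
    using assms m_inv_consistent subgroup.m_inv_closed by (metis subsetD)
qed

lemma card_dvd:
  assumes "subgroup A G" "subgroup B G" "A \<subseteq> B"
  shows "card A dvd card B"
proof -
  have "group (G\<lparr>carrier := B\<rparr>)" using assms(2) subgroup_imp_group by blast
  from group.lagrange[OF this sub_sub[OF assms]] have "card A dvd order (G\<lparr>carrier := B\<rparr>)"
    by (metis dvd_triv_right)
  then show ?thesis by (simp add: order_def)
qed

lemma card_pos: "subgroup A G \<Longrightarrow> 0 < card A"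
  using subgroup.finite_imp_card_positive fin by blast

lemma card_ppow:
  assumes "subgroup A G" shows "\<exists>i. card A = p ^ i"
proof -
  have "card A dvd p ^ n" using card_dvd[OF assms subgroup_self] assms ordG
    unfolding order_def by (metis subgroup.subset)
  then show ?thesis using divides_primepow_nat[OF prime_p] by auto
qed

lemma ratio:
  assumes "subgroup A G" "subgroup B G" "A \<subseteq> B"
  shows "\<exists>a. card B = p ^ a * card A"
proof -
  obtain i j where i: "card A = p ^ i" and j: "card B = p ^ j"
    using card_ppow assms by blast
  have "p ^ i dvd p ^ j" using card_dvd[OF assms] i j by simp
  then have "i \<le> j" using p_ge2 dvd_power_iff_le by blast
  then have "p ^ j = p ^ (j - i) * p ^ i" by (simp flip: power_add)
  then show ?thesis using i j by metis
qed


end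

lemma gb_nonneg: "2 \<le> p \<Longrightarrow> 0 \<le> gauss_binom p c k"
  unfolding gauss_binom_def
proof (intro prod_nonneg ballI divide_nonneg_pos)
  fix i assume "2 \<le> p"
  then have "1 < real p" by simp
  then show "0 \<le> real p ^ (c - i) - 1" and "0 < real p ^ (i + 1) - 1"
    using one_le_power[of "real p" "c - i"] one_less_power[of "real p" "i + 1"] by auto
qed

lemma gb_zero: "gauss_binom p c 0 = 1"
  by (simp add: gauss_binom_def)

lemma gb_big: "c < k \<Longrightarrow> gauss_binom p c k = 0"
  unfolding gauss_binom_def by (rule prod_zero) (auto intro!: bexI[of _ c])

lemma gb_split: "gauss_binom p m k = (\<Prod>i<k. real p ^ (m - i) - 1) / (\<Prod>i<k. real p ^ (i + 1) - 1)"
  unfolding gauss_binom_def by (rule prod_dividef)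

lemma gb_A: "gauss_binom p (Suc c) (Suc k) = gauss_binom p c k * (real p ^ Suc c - 1) / (real p ^ Suc k - 1)"
proof -
  have 1: "(\<Prod>i<Suc k. real p ^ (Suc c - i) - 1) = (real p ^ Suc c - 1) * (\<Prod>i<k. real p ^ (c - i) - 1)"
    by (subst prod.lessThan_Suc_shift) simp
  have 2: "(\<Prod>i<Suc k. real p ^ (i + 1) - 1) = (\<Prod>i<k. real p ^ (i + 1) - 1) * (real p ^ Suc k - 1)"
    by simp
  show ?thesis unfolding gb_split[of p "Suc c"] gb_split[of p c] 1 2 by simp
qed

lemma gb_B: "gauss_binom p c (Suc k) = gauss_binom p c k * (real p ^ (c - k) - 1) / (real p ^ Suc k - 1)"
  unfolding gauss_binom_def by simp

lemma gb_pascal: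
  assumes "2 \<le> p" "1 \<le> k" "k \<le> c"
  shows "gauss_binom p c k = gauss_binom p (c - 1) (k - 1) + real p ^ k * gauss_binom p (c - 1) k"
proof -
  obtain c' k' where c: "c = Suc c'" and k: "k = Suc k'" using assms
    by (cases c; cases k) auto
  have kc: "k' \<le> c'" using assms c k by simp
  have q: "real p ^ Suc k' - 1 \<noteq> 0"
  proof -
    have "real p ^ Suc k' \<ge> real p" using assms by (simp add: self_le_power)
    then show ?thesis using assms by linarith
  qed
  have pw: "real p ^ Suc k' * real p ^ (c' - k') = real p ^ Suc c'"
    using kc by (simp flip: power_add)
  have e1: "gauss_binom p c k = gauss_binom p c' k' * (real p ^ Suc c' - 1) / (real p ^ Suc k' - 1)"
    unfolding c k by (rule gb_A)
  have e2: "gauss_binom p (c - 1) k = gauss_binom p c' k' * (real p ^ (c' - k') - 1) / (real p ^ Suc k' - 1)"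
    unfolding c k diff_Suc_1 by (rule gb_B)
  have e3: "gauss_binom p (c - 1) (k - 1) = gauss_binom p c' k'" unfolding c k by simp
  have h: "real p ^ Suc c' - 1 = (real p ^ Suc k' - 1) + real p ^ Suc k' * (real p ^ (c' - k') - 1)"
    using pw by (simp add: algebra_simps) (metis)
  define Gb where "Gb = gauss_binom p c' k'"
  define DD where "DD = real p ^ Suc k' - 1"
  define XX where "XX = real p ^ Suc k'"
  define YY where "YY = real p ^ (c' - k') - 1"
  have dn: "DD \<noteq> 0" using q DD_def by simp
  have "Gb * (DD + XX * YY) / DD = Gb + XX * (Gb * YY / DD)"
    using dn by (simp add: field_simps)
  then have "Gb * (real p ^ Suc c' - 1) / DD = Gb + XX * (Gb * (real p ^ (c' - k') - 1) / DD)"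
    unfolding h DD_def XX_def YY_def .
  then show ?thesis unfolding e1 e2 e3 using k by (simp add: Gb_def DD_def XX_def)
qed

lemma fixpt_dvd:
  fixes H (structure)
  assumes act: "group_action H E \<phi>" and ordH: "order H = p ^ m"
    and pr: "Factorial_Ring.prime p"
    and AE: "A \<subseteq> E" and finA: "finite A"
    and clos: "\<And>a g. a \<in> A \<Longrightarrow> g \<in> carrier H \<Longrightarrow> \<phi> g a \<in> A"
    and dvdA: "p dvd card A"
  shows "p dvd card {a\<in>A. \<forall>g\<in>carrier H. \<phi> g a = a}"
proof -
  interpret group_action H E \<phi> by (rule act)
  define F where "F = {a\<in>A. \<forall>g\<in>carrier H. \<phi> g a = a}"
  define R where "R = A - F"
  have cardA: "card A = card F + card R"
    unfolding R_def F_def using finA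
    by (metis (no_types, lifting) Diff_disjoint Diff_partition card_Un_disjoint finite_Diff mem_Collect_eq subsetI rev_finite_subset)
  have orb_in: "orbit H \<phi> a \<subseteq> A" if "a \<in> A" for a
    using clos that unfolding orbit_def by auto
  have orbR: "orbit H \<phi> a \<subseteq> R" if aR: "a \<in> R" for a
  proof
    fix b assume b: "b \<in> orbit H \<phi> a"
    have aA: "a \<in> A" using aR R_def by auto
    then have bA: "b \<in> A" using orb_in b by auto
    show "b \<in> R"
    proof (rule ccontr)
      assume "b \<notin> R"
      then have bF: "b \<in> F" using bA R_def by auto
      have "a \<in> orbit H \<phi> b" using orbit_sym[of a b] aA bA AE b by auto
      then obtain g where g: "g \<in> carrier H" "a = \<phi> g b" unfolding orbit_def by auto
      then have "a = b" using bF F_def by auto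
      then show False using aR bF R_def by auto
    qed
  qed
  define r where "r = {(a, b). a \<in> R \<and> b \<in> orbit H \<phi> a}"
  have RA: "R \<subseteq> A" using R_def by auto
  have eq: "equiv R r"
  proof (rule equivI)
    show "r \<subseteq> R \<times> R" unfolding r_def using orbR by auto
    show "refl_on R r" unfolding refl_on_def r_def using orbR orbit_refl RA AE by auto
    show "sym r" unfolding sym_def r_def using orbR orbit_sym RA AE by blast
    show "trans r" unfolding trans_def r_def
    proof (clarify)
      fix x y z assume xy: "x \<in> R" "y \<in> orbit H \<phi> x" "y \<in> R" "z \<in> orbit H \<phi> y"
      have "y \<in> R" using orbR xy by auto
      then have "z \<in> R" using orbR xy by auto
      then show "z \<in> orbit H \<phi> x" using orbit_trans[of x y z] xy RA AE \<open>y \<in> R\<close> by auto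
    qed
  qed
  have finR: "finite R" using finA R_def by auto
  have "p dvd card R"
  proof (rule equiv_imp_dvd_card[OF finR eq])
    fix Xc assume "Xc \<in> R // r"
    then obtain a where aR: "a \<in> R" and X: "Xc = r `` {a}" unfolding quotient_def by auto
    have Xo: "Xc = orbit H \<phi> a" using X orbR aR unfolding r_def by auto
    have aE: "a \<in> E" using aR RA AE by auto
    have "card (orbit H \<phi> a) dvd p ^ m"
      using orbit_stabilizer_theorem[OF aE] ordH by (metis dvd_triv_left)
    then obtain i where i: "card (orbit H \<phi> a) = p ^ i"
      using divides_primepow_nat[OF pr] by auto
    have "a \<notin> F" using aR R_def by auto
    then obtain g where g: "g \<in> carrier H" "\<phi> g a \<noteq> a" using aR RA F_def by auto
    have "{a, \<phi> g a} \<subseteq> orbit H \<phi> a" using orbit_refl[OF aE] g unfolding orbit_def by auto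
    moreover have "finite (orbit H \<phi> a)" using orbR[OF aR] finR finite_subset by auto
    ultimately have "card {a, \<phi> g a} \<le> card (orbit H \<phi> a)" by (rule card_mono[rotated])
    then have "2 \<le> p ^ i" using i g by simp
    then have "i \<noteq> 0" by (cases i) auto
    then show "p dvd card Xc" using Xo i by (simp add: dvd_power)
  qed
  then show ?thesis using dvdA cardA F_def by (metis dvd_add_left_iff)
qed

context pgrp begin

lemma pow_in: "subgroup H G \<Longrightarrow> h \<in> H \<Longrightarrow> h [^] (k::nat) \<in> H"
  by (induct k) (auto simp: subgroup.one_closed subgroup.m_closed)

lemma fin_subgroup:
  assumes S: "S \<subseteq> carrier G" and one: "\<one> \<in> S" and cl: "\<And>a b. a \<in> S \<Longrightarrow> b \<in> S \<Longrightarrow> a \<otimes> b \<in> S"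
  shows "subgroup S G"
proof (rule subgroupI[OF S])
  show "S \<noteq> {}" using one by auto
  show "a \<otimes> b \<in> S" if "a \<in> S" "b \<in> S" for a b using cl that .
  fix a assume a: "a \<in> S"
  have pw: "a [^] (k::nat) \<in> S" for k by (induct k) (auto simp: one cl a)
  have ac: "a \<in> carrier G" using a S by auto
  have "order G \<ge> 1" using ordG p_ge2 by simp
  then have "Suc (order G - 1) = order G" by simp
  then have "a [^] (order G - 1) \<otimes> a = a [^] order G"
    using nat_pow_Suc[of a "order G - 1"] by simp
  also have "\<dots> = \<one>" using pow_order_eq_1[OF ac] .
  finally have "inv a = a [^] (order G - 1)" using inv_equality ac by auto
  then show "inv a \<in> S" using pw by simp
qed

lemma sub_fin: "subgroup A G \<Longrightarrow> finite A"
  using fin subgroup.subset finite_subset by blast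

lemma card_eq_sub:
  assumes "subgroup A G" "subgroup B G" "A \<subseteq> B" "card A = card B" shows "A = B"
  using assms(3,4) card_subset_eq[OF sub_fin[OF assms(2)]] by blast

lemma rcos_Q: "(M #>\<^bsub>G\<lparr>carrier := Q\<rparr>\<^esub> x) = M #> x"
  by (simp add: r_coset_def)

lemma card_rcos_img:
  assumes M: "subgroup M G" and Q: "subgroup Q G" and MQ: "M \<subseteq> Q"
  shows "card ((\<lambda>x. M #> x) ` Q) * card M = card Q"
proof -
  have g: "group (G\<lparr>carrier := Q\<rparr>)" using Q subgroup_imp_group by blast
  have "rcosets\<^bsub>G\<lparr>carrier := Q\<rparr>\<^esub> M = (\<lambda>x. M #> x) ` Q"
    unfolding RCOSETS_def rcos_Q by auto
  then show ?thesis using group.lagrange[OF g sub_sub[OF M Q MQ]] by (simp add: order_def)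
qed

end

context pgrp begin

lemma lr_assoc:
  assumes "g \<in> carrier G" "M \<subseteq> carrier G" "x \<in> carrier G"
  shows "g <# (M #> x) = (g <# M) #> x"
  using assms by (force simp: l_coset_def r_coset_def m_assoc)

lemma conj_coset:
  assumes M: "subgroup M G" and g: "g \<in> M" and x: "x \<in> carrier G"
  shows "g <# (M #> x) #> inv g = M #> (x \<otimes> inv g)"
proof -
  have Mc: "M \<subseteq> carrier G" using M subgroup.subset by blast
  have gc: "g \<in> carrier G" using g Mc by auto
  have "g <# (M #> x) = M #> x" using lr_assoc[OF gc Mc x] coset_join3[OF gc M g] by simp
  then show ?thesis using coset_mult_assoc[OF Mc x] gc by simp
qed

lemma exists_maxsub:
  assumes T: "subgroup T G" and Q: "subgroup Q G" and TQ: "T \<subseteq> Q" and ne: "T \<noteq> Q"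
  shows "\<exists>M. subgroup M G \<and> T \<subseteq> M \<and> M \<subseteq> Q \<and> card Q = p * card M"
proof -
  define CC where "CC = {K. subgroup K G \<and> T \<subseteq> K \<and> K \<subseteq> Q \<and> K \<noteq> Q}"
  have TC: "T \<in> CC" using T TQ ne CC_def by auto
  have bnd: "\<forall>K. K \<in> CC \<longrightarrow> card K < Suc (card (carrier G))"
    using CC_def card_mono[OF fin] subgroup.subset by (metis (mono_tags, lifting) le_imp_less_Suc mem_Collect_eq)
  obtain M where MC: "M \<in> CC" and Mmax: "\<forall>K. K \<in> CC \<longrightarrow> card K \<le> card M"
    using ex_has_greatest_nat[of "\<lambda>K. K \<in> CC" T card, OF TC bnd] by blast
  have M: "subgroup M G" "T \<subseteq> M" "M \<subseteq> Q" "M \<noteq> Q" using MC CC_def by auto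
  have Mc: "M \<subseteq> carrier G" using M subgroup.subset by blast
  have Qc: "Q \<subseteq> carrier G" using Q subgroup.subset by blast
  have mx: "K = Q" if K: "subgroup K G" "M \<subseteq> K" "K \<subseteq> Q" "M \<noteq> K" for K
  proof (rule ccontr)
    assume "K \<noteq> Q" then have "K \<in> CC" using K M CC_def by auto
    then have "card K \<le> card M" using Mmax by auto
    moreover have "card M < card K" using psubset_card_mono[OF sub_fin[OF K(1)]] K(2,4) by auto
    ultimately show False by simp
  qed
  obtain a where a: "card Q = p ^ a * card M" using ratio[OF M(1) Q M(3)] by blast
  have a0: "a \<noteq> 0"
  proof
    assume "a = 0" then have "card M = card Q" using a by simp
    then show False using card_eq_sub[OF M(1) Q M(3)] M(4) by simp
  qed
  define HM where "HM = G\<lparr>carrier := M\<rparr>"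
  define EE where "EE = {H. H \<subseteq> carrier G}"
  define phi where "phi = (\<lambda>g. \<lambda>H\<in>EE. g <# H #> inv g)"
  have act: "group_action HM EE phi"
    using group_action.induced_action[OF action_by_conjugation_on_power_set M(1)]
    unfolding HM_def EE_def phi_def .
  obtain j where j: "card M = p ^ j" using card_ppow[OF M(1)] by blast
  have ordHM: "order HM = p ^ j" using j by (simp add: HM_def order_def)
  define A where "A = (\<lambda>x. M #> x) ` Q"
  have AE: "A \<subseteq> EE" unfolding A_def EE_def using r_coset_subset_G Mc Qc by blast
  have finA: "finite A" unfolding A_def using sub_fin[OF Q] by simp
  have phi_eq: "phi g (M #> x) = M #> (x \<otimes> inv g)" if "g \<in> M" "x \<in> Q" for g x
  proof -
    have "M #> x \<in> EE" using r_coset_subset_G Mc Qc that EE_def by blast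
    then show ?thesis using conj_coset[OF M(1) that(1)] that Qc phi_def by auto
  qed
  have clos: "phi g aa \<in> A" if aA: "aa \<in> A" and gH: "g \<in> carrier HM" for aa g
  proof -
    obtain x where x: "x \<in> Q" "aa = M #> x" using aA A_def by auto
    have g: "g \<in> M" using gH HM_def by simp
    have "inv g \<in> Q" using subgroup.m_inv_closed[OF M(1) g] M(3) by blast
    then have "x \<otimes> inv g \<in> Q" by (rule subgroup.m_closed[OF Q x(1)])
    then show ?thesis using phi_eq[OF g x(1)] x A_def by auto
  qed
  have cA: "card A * card M = card Q" unfolding A_def by (rule card_rcos_img[OF M(1) Q M(3)])
  have "card A = p ^ a" using cA a card_pos[OF M(1)] by simp
  then have dvdA: "p dvd card A" using a0 by (simp add: dvd_power)
  define F where "F = {aa\<in>A. \<forall>g\<in>carrier HM. phi g aa = aa}"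
  have dF: "p dvd card F" unfolding F_def
    using fixpt_dvd[OF act ordHM prime_p AE finA clos dvdA] .
  have one_M: "\<one> \<in> M" using M(1) subgroup.one_closed by blast
  have MM: "M #> \<one> = M" using coset_join2[OF one_closed M(1) one_M] .
  have MF: "M \<in> F"
  proof -
    have "M \<in> A" using MM subgroup.one_closed[OF Q] A_def by (metis image_eqI)
    moreover have "phi g M = M" if "g \<in> carrier HM" for g
    proof -
      have g: "g \<in> M" using that HM_def by simp
      have "phi g (M #> \<one>) = M #> (\<one> \<otimes> inv g)" using phi_eq[OF g] subgroup.one_closed[OF Q] by blast
      also have "\<dots> = M" using g Mc M(1) by (simp add: coset_join2 subgroup.m_inv_closed subsetD)
      finally show ?thesis using MM by simp
    qed
    ultimately show ?thesis using F_def by auto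
  qed
  have finF: "finite F" using finA F_def by simp
  have "card F \<noteq> 0" using MF finF by auto
  then have "p \<le> card F" using dF dvd_imp_le by blast
  then have "\<not> F \<subseteq> {M}" using p_ge2 card_mono[of "{M}" F] by fastforce
  then obtain Cc where Cc: "Cc \<in> F" "Cc \<noteq> M" by blast
  then obtain x where x: "x \<in> Q" "Cc = M #> x" using F_def A_def by auto
  have xc: "x \<in> carrier G" using x Qc by auto
  have xM: "x \<notin> M"
  proof
    assume "x \<in> M"
    then have "M #> x = M" using coset_join2[OF xc M(1)] by blast
    then show False using x(2) Cc(2) by blast
  qed
  have fixC: "\<forall>g\<in>carrier HM. phi g Cc = Cc" using Cc(1) F_def by blast
  have conj: "x \<otimes> g \<otimes> inv x \<in> M" if g: "g \<in> M" for g
  proof -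
    have ig: "inv g \<in> M" by (rule subgroup.m_inv_closed[OF M(1) g])
    have gc: "g \<in> carrier G" using g Mc by blast
    have "inv g \<in> carrier HM" using ig HM_def by simp
    then have "phi (inv g) Cc = Cc" using fixC by blast
    then have "M #> (x \<otimes> inv (inv g)) = M #> x" using phi_eq[OF ig x(1)] x(2) by simp
    then have e1: "M #> (x \<otimes> g) = M #> x" using gc by simp
    have xgc: "x \<otimes> g \<in> carrier G" using xc gc by simp
    have "x \<otimes> g \<in> M #> (x \<otimes> g)" using rcos_self[OF xgc M(1)] .
    then have "x \<otimes> g \<in> M #> x" using e1 by simp
    then show ?thesis using subgroup.rcos_module_imp[OF M(1) is_group xc] by blast
  qed
  have nrm: "x [^] (k::nat) \<otimes> g \<otimes> inv (x [^] k) \<in> M" if g: "g \<in> M" for g k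
    using g
  proof (induct k arbitrary: g)
    case 0 then show ?case using Mc by auto
  next
    case (Suc k)
    define xk where "xk = x [^] k"
    have xkc: "xk \<in> carrier G" using xc xk_def by simp
    have gc: "g \<in> carrier G" using Suc.prems Mc by auto
    have "x [^] Suc k = x \<otimes> xk" using nat_pow_Suc2[OF xc] xk_def by simp
    then have "x [^] Suc k \<otimes> g \<otimes> inv (x [^] Suc k) = x \<otimes> (xk \<otimes> g \<otimes> inv xk) \<otimes> inv x"
      using xc xkc gc by (simp add: inv_mult_group m_assoc)
    moreover have "xk \<otimes> g \<otimes> inv xk \<in> M" using Suc xk_def by simp
    ultimately show ?case using conj by simp
  qed
  have "x [^] (p ^ n) = \<one>" using pow_order_eq_1[OF xc] ordG by simp
  then have ex: "x [^] (p ^ n) \<in> M" using one_M by simp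
  define e where "e = (LEAST e. x [^] (p ^ e) \<in> M)"
  have he: "x [^] (p ^ e) \<in> M" unfolding e_def by (rule LeastI[of _ n]) (rule ex)
  have e0: "e \<noteq> 0"
  proof
    assume "e = 0" then have "x [^] (1::nat) \<in> M" using he by simp
    then show False using xM xc by simp
  qed
  define y where "y = x [^] (p ^ (e - 1))"
  have yM: "y \<notin> M" unfolding y_def e_def
    by (rule not_less_Least) (use e0 e_def in simp)
  have yc: "y \<in> carrier G" using xc y_def by simp
  have "y [^] p = x [^] (p ^ (e - 1) * p)" using nat_pow_pow[OF xc] y_def by simp
  also have "p ^ (e - 1) * p = p ^ e" using e0 by (metis Suc_diff_1 bot_nat_0.not_eq_extremum power_Suc2)
  finally have ypM: "y [^] p \<in> M" using he by simp
  have ynrm: "y [^] (i::nat) \<otimes> g \<otimes> inv (y [^] i) \<in> M" if "g \<in> M" for g i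
    using nrm[OF that, of "p ^ (e - 1) * i"] nat_pow_pow[OF xc] y_def by simp
  define K where "K = {g \<otimes> y [^] i | g i. g \<in> M \<and> (i::nat) \<ge> 0}"
  have Kc: "K \<subseteq> carrier G" using K_def Mc yc by auto
  have K1: "\<one> \<in> K" unfolding K_def using one_M
    by (auto intro!: exI[of _ "\<one>"] exI[of _ "0::nat"])
  have Kcl: "u \<otimes> v \<in> K" if "u \<in> K" "v \<in> K" for u v
  proof -
    obtain g i where u: "u = g \<otimes> y [^] (i::nat)" "g \<in> M" using \<open>u \<in> K\<close> K_def by auto
    obtain g' j where v: "v = g' \<otimes> y [^] (j::nat)" "g' \<in> M" using \<open>v \<in> K\<close> K_def by auto
    define yi where "yi = y [^] i"
    define yj where "yj = y [^] j"
    have yic: "yi \<in> carrier G" "yj \<in> carrier G" using yc yi_def yj_def by auto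
    have gc: "g \<in> carrier G" "g' \<in> carrier G" using u v Mc by auto
    have "u \<otimes> v = (g \<otimes> (yi \<otimes> g' \<otimes> inv yi)) \<otimes> (yi \<otimes> yj)"
    proof -
      have c: "inv yi \<otimes> (yi \<otimes> yj) = yj" using yic by (simp add: m_assoc[symmetric])
      show ?thesis using yic gc c by (simp add: u v yi_def[symmetric] yj_def[symmetric] m_assoc)
    qed
    also have "yi \<otimes> yj = y [^] (i + j)" using nat_pow_mult[OF yc] yi_def yj_def by simp
    finally have "u \<otimes> v = (g \<otimes> (yi \<otimes> g' \<otimes> inv yi)) \<otimes> y [^] (i + j)" .
    moreover have "g \<otimes> (yi \<otimes> g' \<otimes> inv yi) \<in> M"
      unfolding yi_def by (rule subgroup.m_closed[OF M(1) u(2) ynrm[OF v(2)]])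
    ultimately show ?thesis using K_def by auto
  qed
  have Ksg: "subgroup K G" by (rule fin_subgroup[OF Kc K1 Kcl])
  have MK: "M \<subseteq> K"
  proof
    fix g assume "g \<in> M"
    then have "g = g \<otimes> y [^] (0::nat)" "g \<in> M" using Mc by auto
    then show "g \<in> K" unfolding K_def by blast
  qed
  have yK: "y \<in> K"
  proof -
    have "y = \<one> \<otimes> y [^] (1::nat)" using yc by simp
    then show ?thesis unfolding K_def using one_M by blast
  qed
  have yQ: "y \<in> Q" using pow_in[OF Q x(1)] y_def by simp
  have KQ: "K \<subseteq> Q"
  proof
    fix u assume "u \<in> K"
    then obtain g i where u: "u = g \<otimes> y [^] (i::nat)" "g \<in> M" using K_def by auto
    have "g \<in> Q" using u(2) M(3) by blast
    then show "u \<in> Q" unfolding u(1) by (rule subgroup.m_closed[OF Q _ pow_in[OF Q yQ]])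
  qed
  have KeqQ: "K = Q" using mx[OF Ksg MK KQ] yK yM by blast
  have p0: "0 < p" using p_ge2 by simp
  have Ksub: "K \<subseteq> (\<lambda>(g, i). g \<otimes> y [^] i) ` (M \<times> {..<p})"
  proof
    fix u assume "u \<in> K"
    then obtain g i where u: "u = g \<otimes> y [^] (i::nat)" "g \<in> M" using K_def by auto
    have gc: "g \<in> carrier G" using u Mc by auto
    have "y [^] i = y [^] (p * (i div p)) \<otimes> y [^] (i mod p)"
      using nat_pow_mult[OF yc] by simp
    also have "y [^] (p * (i div p)) = (y [^] p) [^] (i div p)" using nat_pow_pow[OF yc] by simp
    finally have "u = (g \<otimes> (y [^] p) [^] (i div p)) \<otimes> y [^] (i mod p)"
      using u gc yc by (simp add: m_assoc)
    moreover have "g \<otimes> (y [^] p) [^] (i div p) \<in> M"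
      by (rule subgroup.m_closed[OF M(1) u(2) pow_in[OF M(1) ypM]])
    moreover have "i mod p < p" using p0 by simp
    ultimately show "u \<in> (\<lambda>(g, i). g \<otimes> y [^] i) ` (M \<times> {..<p})" by force
  qed
  have finMp: "finite (M \<times> {..<p})" using sub_fin[OF M(1)] by simp
  have "card K \<le> card ((\<lambda>(g, i). g \<otimes> y [^] i) ` (M \<times> {..<p}))"
    by (rule card_mono[OF finite_imageI[OF finMp] Ksub])
  also have "\<dots> \<le> card (M \<times> {..<p})" by (rule card_image_le[OF finMp])
  finally have "card K \<le> card (M \<times> {..<p})" .
  then have "card Q \<le> p * card M" using KeqQ by (simp add: card_cartesian_product mult.commute)
  then have "p ^ a \<le> p" using a card_pos[OF M(1)] by simp
  then have "a \<le> 1" using p_ge2 by (metis One_nat_def power_le_imp_le_exp power_one_right Suc_1 Suc_le_lessD)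
  then have "a = 1" using a0 by simp
  then show ?thesis using M a by auto
qed

end

context pgrp begin

definition SS where "SS T Q k = {H. subgroup H G \<and> T \<subseteq> H \<and> H \<subseteq> Q \<and> card Q = p ^ k * card H}"

lemma SS_fin: "finite (SS T Q k)"
proof -
  have "SS T Q k \<subseteq> Pow (carrier G)" unfolding SS_def using subgroup.subset by blast
  then show ?thesis using fin finite_subset by blast
qed

lemma MLh:
  assumes M: "subgroup M G" and L: "subgroup L G" and LM: "L \<subseteq> M" and h: "h \<in> carrier G"
  shows "M <#> (L #> h) = M #> h"
proof -
  have Mc: "M \<subseteq> carrier G" using M subgroup.subset by blast
  have Lc: "L \<subseteq> carrier G" using L subgroup.subset by blast
  have "M <#> L = M"
  proof
    show "M <#> L \<subseteq> M" unfolding set_mult_def using LM subgroup.m_closed[OF M] by blast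
    show "M \<subseteq> M <#> L"
    proof
      fix m assume m: "m \<in> M"
      have "m = m \<otimes> \<one>" using m Mc by auto
      then show "m \<in> M <#> L" unfolding set_mult_def using m subgroup.one_closed[OF L] by blast
    qed
  qed
  then show ?thesis using setmult_rcos_assoc[OF Mc Lc h] by simp
qed

lemma index_bound:
  assumes H: "subgroup H G" and M: "subgroup M G" and Q: "subgroup Q G"
    and HQ: "H \<subseteq> Q" and MQ: "M \<subseteq> Q" and cQ: "card Q = p * card M"
  shows "card H \<le> p * card (H \<inter> M)"
proof -
  define L where "L = H \<inter> M"
  have L: "subgroup L G" unfolding L_def by (rule subgroups_Inter_pair[OF H M])
  have LH: "L \<subseteq> H" and LM: "L \<subseteq> M" using L_def by auto
  have Hc: "H \<subseteq> carrier G" using H subgroup.subset by blast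
  have g: "group (G\<lparr>carrier := H\<rparr>)" using H subgroup_imp_group by blast
  have rc: "rcosets\<^bsub>G\<lparr>carrier := H\<rparr>\<^esub> L = (\<lambda>x. L #> x) ` H"
    unfolding RCOSETS_def rcos_Q by auto
  have lag: "card ((\<lambda>x. L #> x) ` H) * card L = card H"
    using group.lagrange[OF g sub_sub[OF L H LH]] rc by (simp add: order_def)
  have inj: "inj_on (\<lambda>C. M <#> C) ((\<lambda>x. L #> x) ` H)"
  proof (rule inj_onI)
    fix C1 C2 assume "C1 \<in> (\<lambda>x. L #> x) ` H" "C2 \<in> (\<lambda>x. L #> x) ` H" and eq: "M <#> C1 = M <#> C2"
    then obtain h1 h2 where h: "h1 \<in> H" "h2 \<in> H" "C1 = L #> h1" "C2 = L #> h2" by auto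
    have hc: "h1 \<in> carrier G" "h2 \<in> carrier G" using h Hc by auto
    have "M #> h1 = M #> h2" using eq h MLh[OF M L LM] hc by simp
    moreover have "h1 \<in> M #> h1" by (rule rcos_self[OF hc(1) M])
    ultimately have "h1 \<in> M #> h2" by simp
    then have m: "h1 \<otimes> inv h2 \<in> M" by (rule subgroup.rcos_module_imp[OF M is_group hc(2)])
    have "h1 \<otimes> inv h2 \<in> H"
      by (rule subgroup.m_closed[OF H h(1) subgroup.m_inv_closed[OF H h(2)]])
    then have l: "h1 \<otimes> inv h2 \<in> L" using m L_def by simp
    have "h1 = (h1 \<otimes> inv h2) \<otimes> h2" using hc by (simp add: m_assoc)
    then have "h1 \<in> L #> h2" using l unfolding r_coset_def by blast
    then have "L #> h2 = L #> h1" by (rule repr_independence[OF _ hc(2) L])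
    then show "C1 = C2" using h by simp
  qed
  have img: "(\<lambda>C. M <#> C) ` ((\<lambda>x. L #> x) ` H) \<subseteq> (\<lambda>x. M #> x) ` Q"
  proof
    fix D assume "D \<in> (\<lambda>C. M <#> C) ` ((\<lambda>x. L #> x) ` H)"
    then obtain h where h: "h \<in> H" "D = M <#> (L #> h)" by auto
    then have "D = M #> h" using MLh[OF M L LM] Hc by auto
    then show "D \<in> (\<lambda>x. M #> x) ` Q" using h HQ by auto
  qed
  have "card ((\<lambda>x. L #> x) ` H) = card ((\<lambda>C. M <#> C) ` ((\<lambda>x. L #> x) ` H))"
    using card_image[OF inj] by simp
  also have "\<dots> \<le> card ((\<lambda>x. M #> x) ` Q)"
    using card_mono[OF _ img] sub_fin[OF Q] by simp
  also have "\<dots> = p" using card_rcos_img[OF M Q MQ] cQ card_pos[OF M] by simp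
  finally have "card ((\<lambda>x. L #> x) ` H) \<le> p" .
  then have "card H \<le> p * card L" using lag by (metis mult_le_mono1)
  then show ?thesis using L_def by simp
qed

lemma inter_index:
  assumes H: "subgroup H G" and M: "subgroup M G" and Q: "subgroup Q G"
    and HQ: "H \<subseteq> Q" and MQ: "M \<subseteq> Q" and cQ: "card Q = p * card M" and nHM: "\<not> H \<subseteq> M"
  shows "card H = p * card (H \<inter> M)"
proof -
  have L: "subgroup (H \<inter> M) G" by (rule subgroups_Inter_pair[OF H M])
  obtain b where b: "card H = p ^ b * card (H \<inter> M)" using ratio[OF L H] by blast
  have "b \<noteq> 0"
  proof
    assume "b = 0" then have "card (H \<inter> M) = card H" using b by simp
    then have "H \<inter> M = H" using card_eq_sub[OF L H] by blast
    then show False using nHM by blast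
  qed
  moreover have "p ^ b \<le> p"
    using index_bound[OF H M Q HQ MQ cQ] b card_pos[OF L] by simp
  ultimately have "b = 1" using p_ge2
    by (metis One_nat_def power_le_imp_le_exp power_one_right Suc_1 Suc_le_lessD le_antisym less_one not_le)
  then show ?thesis using b by simp
qed

end

context pgrp begin

lemma fiber_bound:
  assumes T: "subgroup T G" and M: "subgroup M G" and Q: "subgroup Q G" and MQ: "M \<subseteq> Q"
    and cQ: "card Q = p * card M" and L: "L \<in> SS T M k"
  shows "card {H \<in> SS T Q k. \<not> H \<subseteq> M \<and> H \<inter> M = L} \<le> p ^ k"
proof -
  define Fb where "Fb = {H \<in> SS T Q k. \<not> H \<subseteq> M \<and> H \<inter> M = L}"
  have Ls: "subgroup L G" and LM: "L \<subseteq> M" and cM: "card M = p ^ k * card L"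
    using L unfolding SS_def by auto
  have Lpos: "0 < card L" using card_pos[OF Ls] .
  have memF: "subgroup H G \<and> H \<subseteq> Q \<and> \<not> H \<subseteq> M \<and> H \<inter> M = L" if "H \<in> Fb" for H
    using that unfolding Fb_def SS_def by auto
  have cH: "card H = p * card L" if "H \<in> Fb" for H
    using inter_index[OF _ M Q _ MQ cQ] memF[OF that] by metis
  have LH: "L \<subseteq> H" if "H \<in> Fb" for H using memF[OF that] by blast
  have cHL: "card (H - L) = (p - 1) * card L" if "H \<in> Fb" for H
  proof -
    have "card (H - L) = card H - card L"
      using card_Diff_subset[OF finite_subset[OF LH[OF that] sub_fin[OF memF[OF that, THEN conjunct1]]] LH[OF that]] .
    then show ?thesis using cH[OF that] by (simp add: diff_mult_distrib)
  qed
  have disj: "(H1 - L) \<inter> (H2 - L) = {}" if h: "H1 \<in> Fb" "H2 \<in> Fb" "H1 \<noteq> H2" for H1 H2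
  proof (rule ccontr)
    assume "(H1 - L) \<inter> (H2 - L) \<noteq> {}"
    then obtain z where z: "z \<in> H1" "z \<in> H2" "z \<notin> L" by blast
    have s1: "subgroup H1 G" and s2: "subgroup H2 G" using memF h by auto
    have I: "subgroup (H1 \<inter> H2) G" by (rule subgroups_Inter_pair[OF s1 s2])
    have LI: "L \<subseteq> H1 \<inter> H2" using LH h by blast
    have eqH: "H1 \<inter> H2 = Hx" if hx: "Hx \<in> Fb" "H1 \<inter> H2 \<subseteq> Hx" for Hx
    proof -
      have sx: "subgroup Hx G" using memF[OF hx(1)] by blast
      obtain a where a: "card (H1 \<inter> H2) = p ^ a * card L" using ratio[OF Ls I LI] by blast
      obtain b where b: "card Hx = p ^ b * card (H1 \<inter> H2)" using ratio[OF I sx hx(2)] by blast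
      have "p * card L = p ^ (a + b) * card L" using a b cH[OF hx(1)] by (simp add: power_add mult.commute)
      then have pe: "p ^ (a + b) = p ^ 1" using Lpos by simp
      have p1: "1 < p" using p_ge2 by simp
      have ab: "a + b = 1" using power_inject_exp[OF p1, of "a + b" 1] pe by blast
      have "a \<noteq> 0"
      proof
        assume "a = 0" then have "card L = card (H1 \<inter> H2)" using a by simp
        then have "L = H1 \<inter> H2" using card_eq_sub[OF Ls I LI] by blast
        then show False using z by blast
      qed
      then have "b = 0" using ab by simp
      then have "card (H1 \<inter> H2) = card Hx" using b by simp
      then show ?thesis using card_eq_sub[OF I sx hx(2)] by blast
    qed
    have "H1 \<inter> H2 = H1" using eqH[OF h(1)] by blast
    moreover have "H1 \<inter> H2 = H2" using eqH[OF h(2)] by blast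
    ultimately show False using h(3) by simp
  qed
  have nonempty: "H - L \<noteq> {}" if "H \<in> Fb" for H
  proof -
    have "card (H - L) \<noteq> 0" using cHL[OF that] Lpos p_ge2 by simp
    then show ?thesis by (metis card.empty)
  qed
  have inj: "inj_on (\<lambda>H. H - L) Fb"
  proof (rule inj_onI)
    fix H1 H2 assume h: "H1 \<in> Fb" "H2 \<in> Fb" "H1 - L = H2 - L"
    show "H1 = H2"
    proof (rule ccontr)
      assume "H1 \<noteq> H2"
      then have "(H1 - L) \<inter> (H2 - L) = {}" using disj h by blast
      then show False using h(3) nonempty[OF h(1)] by simp
    qed
  qed
  define CC where "CC = (\<lambda>H. H - L) ` Fb"
  have finFb: "finite Fb" unfolding Fb_def using SS_fin by simp
  have UC: "\<Union>CC \<subseteq> Q - M"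
  proof
    fix z assume "z \<in> \<Union>CC"
    then obtain H where H: "H \<in> Fb" "z \<in> H" "z \<notin> L" unfolding CC_def by auto
    then show "z \<in> Q - M" using memF[OF H(1)] by blast
  qed
  have finQM: "finite (Q - M)" using sub_fin[OF Q] by simp
  have part: "((p - 1) * card L) * card CC = card (\<Union>CC)"
  proof (rule card_partition)
    show "finite CC" unfolding CC_def using finFb by simp
    show "finite (\<Union>CC)" using finite_subset[OF UC finQM] .
    show "\<And>c. c \<in> CC \<Longrightarrow> card c = (p - 1) * card L" unfolding CC_def using cHL by auto
    show "\<And>c1 c2. c1 \<in> CC \<Longrightarrow> c2 \<in> CC \<Longrightarrow> c1 \<noteq> c2 \<Longrightarrow> c1 \<inter> c2 = {}"
      unfolding CC_def using disj by blast
  qed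
  have "card (\<Union>CC) \<le> card (Q - M)" using card_mono[OF finQM UC] .
  also have "card (Q - M) = card Q - card M"
    using card_Diff_subset[OF finite_subset[OF MQ sub_fin[OF Q]] MQ] .
  also have "\<dots> = (p - 1) * card M" using cQ by (simp add: diff_mult_distrib)
  also have "\<dots> = ((p - 1) * card L) * p ^ k" using cM by simp
  finally have "((p - 1) * card L) * card CC \<le> ((p - 1) * card L) * p ^ k" using part by simp
  moreover have "0 < (p - 1) * card L" using Lpos p_ge2 by simp
  ultimately have "card CC \<le> p ^ k" by simp
  moreover have "card CC = card Fb" unfolding CC_def using card_image[OF inj] .
  ultimately show ?thesis unfolding Fb_def by simp
qed

end

context pgrp begin

lemma triv_bound:
  assumes T: "subgroup T G" and Q: "subgroup Q G" and TQ: "T \<subseteq> Q"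
    and cQ: "card Q = p ^ c * card T" and k: "k = 0 \<or> c < k"
  shows "real (card (SS T Q k)) \<le> gauss_binom p c k"
proof (cases "k = 0")
  case True
  have "SS T Q k \<subseteq> {Q}"
  proof
    fix H assume "H \<in> SS T Q k"
    then have H: "subgroup H G" "H \<subseteq> Q" "card Q = card H" using True unfolding SS_def by auto
    then show "H \<in> {Q}" using card_eq_sub[OF H(1) Q H(2)] by simp
  qed
  then have "card (SS T Q k) \<le> 1" using card_mono[of "{Q}"] by fastforce
  then show ?thesis using True gb_zero by simp
next
  case False
  then have ck: "c < k" using k by simp
  have "SS T Q k = {}"
  proof (rule ccontr)
    assume "SS T Q k \<noteq> {}"
    then obtain H where "H \<in> SS T Q k" by blast
    then have H: "subgroup H G" "T \<subseteq> H" "card Q = p ^ k * card H" unfolding SS_def by auto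
    have "card T \<le> card H" using card_mono[OF sub_fin[OF H(1)] H(2)] .
    moreover have "p ^ c < p ^ k" using ck p_ge2 by (simp add: power_strict_increasing)
    moreover have "0 < card T" using card_pos[OF T] .
    ultimately have "p ^ c * card T < p ^ k * card T" "p ^ k * card T \<le> p ^ k * card H" by simp_all
    then have "p ^ c * card T < p ^ k * card H" by linarith
    then show False using H(3) cQ by simp
  qed
  then show ?thesis using gb_nonneg[OF p_ge2] by simp
qed

lemma main:
  assumes T: "subgroup T G"
  shows "subgroup Q G \<Longrightarrow> T \<subseteq> Q \<Longrightarrow> card Q = p ^ c * card T \<Longrightarrow>
    real (card (SS T Q k)) \<le> gauss_binom p c k"
proof (induct c arbitrary: Q k)
  case 0
  then show ?case using triv_bound[OF T] by (cases "k = 0") auto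
next
  case (Suc c)
  note Q = Suc.prems(1) and TQ = Suc.prems(2) and cQ = Suc.prems(3)
  show ?case
  proof (cases "k = 0 \<or> Suc c < k")
    case True
    then show ?thesis using triv_bound[OF T Q TQ cQ] by blast
  next
    case False
    then have k1: "1 \<le> k" and kc: "k \<le> Suc c" by auto
    have TQne: "T \<noteq> Q"
    proof
      assume "T = Q"
      then have "1 * card T = p ^ Suc c * card T" using cQ by simp
      then have "p ^ Suc c = 1" using card_pos[OF T] by (metis mult_cancel_right zero_less_iff_neq_zero)
      then show False using p_ge2 by auto
    qed
    obtain M where M: "subgroup M G" "T \<subseteq> M" "M \<subseteq> Q" and cQM: "card Q = p * card M"
      using exists_maxsub[OF T Q TQ TQne] by blast
    have "p * card M = p * (p ^ c * card T)" using cQ cQM by (metis mult.assoc power_Suc)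
    then have cM: "card M = p ^ c * card T" using p_ge2 by auto
    define S1 where "S1 = {H \<in> SS T Q k. H \<subseteq> M}"
    define S2 where "S2 = {H \<in> SS T Q k. \<not> H \<subseteq> M}"
    define Fb where "Fb = (\<lambda>L. {H \<in> SS T Q k. \<not> H \<subseteq> M \<and> H \<inter> M = L})"
    have S: "SS T Q k = S1 \<union> S2" unfolding S1_def S2_def by auto
    have pk: "p ^ k = p * p ^ (k - 1)" using k1 by (cases k) auto
    have S1sub: "S1 \<subseteq> SS T M (k - 1)"
    proof
      fix H assume "H \<in> S1"
      then have H: "subgroup H G" "T \<subseteq> H" "H \<subseteq> M" "card Q = p ^ k * card H"
        unfolding S1_def SS_def by auto
      have "p * card M = p ^ k * card H" using cQM H(4) by simp
      also have "\<dots> = p * (p ^ (k - 1) * card H)" unfolding pk by (rule mult.assoc)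
      finally have "p * card M = p * (p ^ (k - 1) * card H)" .
      then have "card M = p ^ (k - 1) * card H" using p_ge2 by auto
      then show "H \<in> SS T M (k - 1)" using H unfolding SS_def by simp
    qed
    have S2sub: "S2 \<subseteq> (\<Union>L\<in>SS T M k. Fb L)"
    proof
      fix H assume "H \<in> S2"
      then have H: "subgroup H G" "T \<subseteq> H" "H \<subseteq> Q" "card Q = p ^ k * card H" "\<not> H \<subseteq> M"
        unfolding S2_def SS_def by auto
      have cH: "card H = p * card (H \<inter> M)" by (rule inter_index[OF H(1) M(1) Q H(3) M(3) cQM H(5)])
      have "p * card M = p ^ k * (p * card (H \<inter> M))" using H(4) cQM cH by simp
      also have "\<dots> = p * (p ^ k * card (H \<inter> M))" by (rule mult.left_commute)
      finally have "p * card M = p * (p ^ k * card (H \<inter> M))" .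
      then have "card M = p ^ k * card (H \<inter> M)" using p_ge2 by auto
      then have "H \<inter> M \<in> SS T M k"
        using subgroups_Inter_pair[OF H(1) M(1)] H(2) M(2) unfolding SS_def by auto
      moreover have "H \<in> Fb (H \<inter> M)" using \<open>H \<in> S2\<close> unfolding Fb_def S2_def by auto
      ultimately show "H \<in> (\<Union>L\<in>SS T M k. Fb L)" by blast
    qed
    have c1: "card S1 \<le> card (SS T M (k - 1))" using card_mono[OF SS_fin S1sub] .
    have "card S2 \<le> card (\<Union>L\<in>SS T M k. Fb L)"
      using card_mono[OF _ S2sub] SS_fin Fb_def by simp
    also have "\<dots> \<le> (\<Sum>L\<in>SS T M k. card (Fb L))" by (rule card_UN_le[OF SS_fin])
    also have "\<dots> \<le> (\<Sum>L\<in>SS T M k. p ^ k)"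
      by (rule sum_mono) (use fiber_bound[OF T M(1) Q M(3) cQM] Fb_def in auto)
    also have "\<dots> = p ^ k * card (SS T M k)" by simp
    finally have c2: "card S2 \<le> p ^ k * card (SS T M k)" .
    have "card (SS T Q k) \<le> card S1 + card S2" unfolding S by (rule card_Un_le)
    then have "real (card (SS T Q k)) \<le> real (card (SS T M (k - 1))) + real p ^ k * real (card (SS T M k))"
    proof -
      have r0: "real (card (SS T Q k)) \<le> real (card S1) + real (card S2)"
        using \<open>card (SS T Q k) \<le> card S1 + card S2\<close> by linarith
      have r1: "real (card S1) \<le> real (card (SS T M (k - 1)))" using c1 by linarith
      have "real (card S2) \<le> real (p ^ k * card (SS T M k))" using c2 by linarith
      then have r2: "real (card S2) \<le> real p ^ k * real (card (SS T M k))" by simp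
      show ?thesis using r0 r1 r2 by linarith
    qed
    also have "\<dots> \<le> gauss_binom p c (k - 1) + real p ^ k * gauss_binom p c k"
      using Suc.hyps[OF M(1) M(2) cM] by (intro add_mono mult_left_mono) auto
    also have "\<dots> = gauss_binom p (Suc c) k" using gb_pascal[OF p_ge2 k1 kc] by simp
    finally show ?thesis .
  qed
qed

end

theorem proposition2p1:
  fixes P :: "('a, 'b) monoid_scheme" and T :: "'a set" and p c k :: nat
  assumes "Factorial_Ring.prime p"
    and "group P" and "finite (carrier P)"
    and "\<exists>n. order P = p ^ n"
    and "subgroup T P"
    and "card (rcosets\<^bsub>P\<^esub> T) = p ^ c"
  shows "real (card (Sub_idx P (p ^ k) T)) \<le> gauss_binom p c k"
proof -
  obtain n where n: "order P = p ^ n" using assms(4) by blast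
  have "pgrp P p n" unfolding pgrp_def pgrp_axioms_def using assms n by auto
  then interpret pgrp P p n .
  have eq: "Sub_idx P (p ^ k) T = SS T (carrier P) k"
  proof -
    have "card (rcosets\<^bsub>P\<^esub> H) = p ^ k \<longleftrightarrow> card (carrier P) = p ^ k * card H" if H: "subgroup H P" for H
    proof -
      have l: "card (rcosets\<^bsub>P\<^esub> H) * card H = card (carrier P)" using lagrange[OF H] by (simp add: order_def)
      have "0 < card H" using card_pos[OF H] .
      then show ?thesis using l by (metis mult.commute mult_cancel_right nat_neq_iff not_less_zero)
    qed
    then show ?thesis unfolding Sub_idx_def SS_def using subgroup.subset by blast
  qed
  have cT: "card (carrier P) = p ^ c * card T"
    using lagrange[OF assms(5)] assms(6) by (simp add: order_def)
  show ?thesis unfolding eq by (rule main[OF assms(5) subgroup_self _ cT]) (use assms(5) subgroup.subset in blast)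
qed

end
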